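(* Let $t$ be a positive integer. Let $\overline{\mathcal{G}}_t$ be the set of nonempty overpartitions whose largest and smallest parts differ by at most $t$, and whose largest part is not overlined whenever this difference is exactly $t$. Let $\overline{\mathcal{P}}_t$ be the set of nonempty overpartitions all of whose parts are at most $t$ and in which no part equal to $t$ is overlined. Define $\phi$ on $\overline{\mathcal{G}}_t$ as follows: for $\pi=(\pi_1,\dots,\pi_\ell)\in\overline{\mathcal{G}}_t$ (parts weakly decreasing), let $s=\lfloor \pi_\ell/t\rfloor$, and let $k$ be the positive integer with $\pi_k\ge (s+1)t>\pi_{k+1}$ if such an integer exists, and $k=0$ otherwise. Set \[ \phi(\pi)=(\underbrace{t,\dots,t}_{s(\ell-k)+(s+1)k},\ \pi_{k+1}-st,\dots,\pi_\ell-st,\ \pi_1-(s+1)t,\dots,\pi_k-(s+1)t), \] where the parts equal to $t$ listed first are not overlined, each part $\pi_i-st$ or $\pi_i-(s+1)t$ is overlined exactly when $\pi_i$ is overlined, and afterwards all parts equal to $0$ are deleted. Then $\phi(\pi)\in\overline{\mathcal{P}}_t$ for every $\pi\in\overline{\mathcal{G}}_t$, and $|\phi(\pi)|=|\pi|$.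
   Context: An overpartition is a partition (weakly decreasing sequence of positive integers) in which the first occurrence of each distinct part size may be overlined; an overlined part $\overline{a}$ has size $a$ for all comparisons and arithmetic. $|\lambda|$ denotes the sum of the parts of $\lambda$. $\lfloor x\rfloor$ is the largest integer not exceeding $x$. *)

theory Defs
  imports Main
begin

text \<open>An overpartition is a list of parts (size, overlined?) with positive sizes,
  weakly decreasing in size, where an overlined part must be the first occurrence
  of its size.\<close>

type_synonym opart = "(nat \<times> bool) list"

definition is_overpartition :: "opart \<Rightarrow> bool" where
  "is_overpartition xs \<longleftrightarrow>
     (\<forall>p \<in> set xs. fst p > 0) \<and>
     sorted_wrt (\<lambda>a b. fst a \<ge> fst b) xs \<and>
     (\<forall>i j. i < j \<and> j < length xs \<and> fst (xs ! i) = fst (xs ! j) \<longrightarrow> \<not> snd (xs ! j))"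

definition opsize :: "opart \<Rightarrow> nat" where
  "opsize xs = sum_list (map fst xs)"

definition G_set :: "nat \<Rightarrow> opart set" where
  "G_set t = {xs. is_overpartition xs \<and> xs \<noteq> [] \<and>
      fst (hd xs) - fst (last xs) \<le> t \<and>
      (fst (hd xs) - fst (last xs) = t \<longrightarrow> \<not> snd (hd xs))}"

definition P_set :: "nat \<Rightarrow> opart set" where
  "P_set t = {xs. is_overpartition xs \<and> xs \<noteq> [] \<and>
      (\<forall>p \<in> set xs. fst p \<le> t) \<and> (\<forall>p \<in> set xs. fst p = t \<longrightarrow> \<not> snd p)}"

text \<open>The index k (1-based): the positive integer with pi_k >= (s+1)t > pi_(k+1), or 0.\<close>
definition phi_k :: "nat \<Rightarrow> opart \<Rightarrow> nat" where
  "phi_k t xs = (let s = fst (last xs) div t;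
      P = (\<lambda>k. 1 \<le> k \<and> k < length xs \<and> fst (xs ! (k - 1)) \<ge> (s + 1) * t \<and> (s + 1) * t > fst (xs ! k))
    in if (\<exists>k. P k) then (THE k. P k) else 0)"

definition phi :: "nat \<Rightarrow> opart \<Rightarrow> opart" where
  "phi t xs = (let l = length xs; s = fst (last xs) div t; k = phi_k t xs;
      body = replicate (s * (l - k) + (s + 1) * k) (t, False)
             @ map (\<lambda>(a, b). (a - s * t, b)) (drop k xs)
             @ map (\<lambda>(a, b). (a - (s + 1) * t, b)) (take k xs)
    in filter (\<lambda>p. fst p \<noteq> 0) body)"

end

theory Submission
  imports Defs
begin

definition Rel :: "nat \<times> bool \<Rightarrow> nat \<times> bool \<Rightarrow> bool" where
  "Rel a b \<longleftrightarrow> fst b \<le> fst a \<and> (fst a = fst b \<longrightarrow> \<not> snd b)"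

lemma overp_iff:
  "is_overpartition xs \<longleftrightarrow> (\<forall>p \<in> set xs. fst p > 0) \<and> sorted_wrt Rel xs"
  unfolding is_overpartition_def Rel_def sorted_wrt_iff_nth_less by blast

lemma sum_filter0: "sum_list (map fst (filter (\<lambda>p. fst p \<noteq> 0) ys)) = sum_list (map fst ys)"
  by (induction ys) auto

lemma sum_shift:
  "(\<forall>p\<in>set ys. c \<le> fst p) \<Longrightarrow>
   sum_list (map fst (map (\<lambda>(a, b). (a - c, b)) ys)) + c * length ys = sum_list (map fst ys)"
  by (induction ys) (auto simp: split_def)

lemma sorted_shift:
  assumes "sorted_wrt Rel ys" "\<forall>p\<in>set ys. c \<le> fst p"
  shows "sorted_wrt Rel (map (\<lambda>(a, b). (a - c, b)) ys)"
  unfolding sorted_wrt_map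
  by (rule sorted_wrt_mono_rel[OF _ assms(1)]) (use assms(2) in \<open>auto simp: Rel_def split_def\<close>)

theorem mainTheorem2:
  fixes t :: nat and xs :: opart
  assumes "t > 0" and "xs \<in> G_set t"
  shows "phi t xs \<in> P_set t \<and> opsize (phi t xs) = opsize xs"
proof -
  have ov: "is_overpartition xs" and ne: "xs \<noteq> []"
    and dif: "fst (hd xs) - fst (last xs) \<le> t"
    and hdc: "fst (hd xs) - fst (last xs) = t \<longrightarrow> \<not> snd (hd xs)"
    using assms(2) by (auto simp: G_set_def)
  have pos: "\<forall>p\<in>set xs. fst p > 0" and srt: "sorted_wrt Rel xs" using ov overp_iff by auto
  have srt2: "sorted_wrt (\<lambda>a b. fst a \<ge> fst b) xs" using ov unfolding is_overpartition_def by blast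
  have ovl: "\<And>i j. i < j \<Longrightarrow> j < length xs \<Longrightarrow> fst (xs ! i) = fst (xs ! j) \<Longrightarrow> \<not> snd (xs ! j)"
    using ov unfolding is_overpartition_def by blast
  define l where "l = length xs"
  define m where "m = fst (last xs)"
  define M where "M = fst (hd xs)"
  define s where "s = m div t"
  define k where "k = phi_k t xs"
  have lpos: "l > 0" using ne l_def by auto
  have hd0: "hd xs = xs ! 0" using ne by (simp add: hd_conv_nth)
  have last0: "last xs = xs ! (l - 1)" using ne l_def by (simp add: last_conv_nth)
  have mono: "\<And>i j. i \<le> j \<Longrightarrow> j < l \<Longrightarrow> fst (xs ! j) \<le> fst (xs ! i)"
  proof -
    fix i j assume "i \<le> j" "j < l"
    then show "fst (xs ! j) \<le> fst (xs ! i)"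
      using srt2 l_def by (cases "i = j") (auto simp: sorted_wrt_iff_nth_less)
  qed
  have bnd: "\<And>p. p \<in> set xs \<Longrightarrow> m \<le> fst p \<and> fst p \<le> M"
  proof -
    fix p assume "p \<in> set xs"
    then obtain i where i: "i < l" "p = xs ! i" by (auto simp: in_set_conv_nth l_def)
    show "m \<le> fst p \<and> fst p \<le> M"
      using mono[of i "l - 1"] mono[of 0 i] i unfolding m_def M_def hd0 last0 by auto
  qed
  have Mm: "M \<le> m + t"
  proof -
    have "m \<le> M" using bnd[of "hd xs"] ne by simp
    then show ?thesis using dif M_def m_def by simp
  qed
  have stm: "s * t \<le> m" "m < (s + 1) * t"
  proof -
    have "m = m div t * t + m mod t" by simp
    moreover have "m mod t < t" using assms(1) by simp
    ultimately have "m div t * t \<le> m" "m < m div t * t + t" by linarith+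
    then show "s * t \<le> m" "m < (s + 1) * t" unfolding s_def by (simp_all add: algebra_simps)
  qed
  define P where "P = (\<lambda>k. 1 \<le> k \<and> k < length xs \<and> fst (xs ! (k - 1)) \<ge> (s + 1) * t \<and> (s + 1) * t > fst (xs ! k))"
  have kdef: "k = (if (\<exists>k. P k) then (THE k. P k) else 0)"
    unfolding k_def phi_k_def P_def s_def m_def Let_def by simp
  have kA: "\<forall>p\<in>set (take k xs). (s + 1) * t \<le> fst p"
   and kB: "\<forall>p\<in>set (drop k xs). fst p < (s + 1) * t"
   and kl: "k \<le> l"
  proof -
    have "(k = 0 \<and> (\<forall>i<l. fst (xs ! i) < (s+1)*t)) \<or> P k"
    proof (cases "\<exists>k. P k")
      case True
      have uniq: "\<And>a b. P a \<Longrightarrow> P b \<Longrightarrow> a = b"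
      proof (rule ccontr)
        fix a b assume pa: "P a" and pb: "P b" and "a \<noteq> b"
        { fix a b assume pa: "P a" and pb: "P b" and "a < b"
          then have "a \<le> b - 1" "b - 1 < l" using l_def unfolding P_def by auto
          then have "fst (xs ! (b - 1)) \<le> fst (xs ! a)" using mono[of a "b-1"] by auto
          then have False using pa pb unfolding P_def by auto }
        then show False using pa pb \<open>a \<noteq> b\<close> by (metis linorder_neqE_nat)
      qed
      then have "P (THE k. P k)" using True by (metis theI)
      then show ?thesis using True kdef by simp
    next
      case False
      have "\<forall>i<l. fst (xs ! i) < (s+1)*t"
      proof (cases "M < (s+1)*t")
        case True then show ?thesis using bnd l_def by (meson le_less_trans nth_mem)
      next
        case F2: False
        define j where "j = (LEAST j. j < l \<and> fst (xs ! j) < (s+1)*t)"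
        have ex: "l - 1 < l \<and> fst (xs ! (l-1)) < (s+1)*t" using lpos stm last0 m_def by simp
        have j: "j < l \<and> fst (xs ! j) < (s+1)*t" using LeastI[of "\<lambda>j. j < l \<and> fst (xs ! j) < (s+1)*t" "l-1", OF ex] j_def by simp
        have j0: "j \<noteq> 0" using j F2 M_def hd0 by (metis gr0I)
        have "\<not> (j - 1 < l \<and> fst (xs ! (j-1)) < (s+1)*t)"
          using not_less_Least[of "j-1" "\<lambda>j. j < l \<and> fst (xs ! j) < (s+1)*t"] j0
          unfolding j_def[symmetric] by linarith
        then have "P j" using j j0 unfolding P_def l_def by auto
        then show ?thesis using False by blast
      qed
      then show ?thesis using False kdef by simp
    qed
    then have D: "(k = 0 \<and> (\<forall>i<l. fst (xs ! i) < (s+1)*t)) \<or> P k" .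
    have "(\<forall>p\<in>set (take k xs). (s + 1) * t \<le> fst p) \<and>
        (\<forall>p\<in>set (drop k xs). fst p < (s + 1) * t) \<and> k \<le> l"
    proof (cases "P k")
      case False
      then have k0: "k = 0" and all: "\<forall>i<l. fst (xs ! i) < (s+1)*t" using D by auto
      have "\<forall>p\<in>set (drop k xs). fst p < (s + 1) * t" using k0 all l_def
        by (metis drop0 in_set_conv_nth)
      then show ?thesis using k0 by simp
    next
      case True
      then have pk: "P k" .
      have c3: "k \<le> l" using pk P_def l_def by simp
      have c1: "\<forall>p\<in>set (take k xs). (s + 1) * t \<le> fst p"
      proof
        fix p assume "p \<in> set (take k xs)"
        then obtain i where "i < k" "p = xs ! i" using pk unfolding P_def
          by (auto simp: in_set_conv_nth)
        moreover have "i \<le> k - 1" "k - 1 < l" using \<open>i < k\<close> pk unfolding P_def l_def by auto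
        ultimately show "(s + 1) * t \<le> fst p" using mono[of i "k-1"] pk unfolding P_def by auto
      qed
      have c2: "\<forall>p\<in>set (drop k xs). fst p < (s + 1) * t"
      proof
        fix p assume "p \<in> set (drop k xs)"
        then obtain i where "i < l - k" "p = xs ! (k + i)" using pk unfolding P_def l_def
          by (auto simp: in_set_conv_nth)
        moreover have "k + i < l" using \<open>i < l - k\<close> by simp
        ultimately show "fst p < (s + 1) * t" using mono[of k "k+i"] pk unfolding P_def by auto
      qed
      show ?thesis using c1 c2 c3 by blast
    qed
    then show "\<forall>p\<in>set (take k xs). (s + 1) * t \<le> fst p"
        "\<forall>p\<in>set (drop k xs). fst p < (s + 1) * t" "k \<le> l" by blast+
  qed
  define A where "A = map (\<lambda>(a, b). (a - (s + 1) * t, b)) (take k xs)"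
  define B where "B = map (\<lambda>(a, b). (a - s * t, b)) (drop k xs)"
  define R where "R = replicate (s * (l - k) + (s + 1) * k) (t, False)"
  have phieq: "phi t xs = filter (\<lambda>p. fst p \<noteq> 0) (R @ B @ A)"
    unfolding phi_def Let_def R_def A_def B_def k_def l_def s_def m_def by simp
  have Bge: "\<forall>p\<in>set (drop k xs). s * t \<le> fst p"
    using bnd stm by (meson in_set_dropD order_trans)
  have Alt: "\<forall>p\<in>set A. fst p < t"
  proof
    fix p assume "p \<in> set A"
    then obtain q where q: "q \<in> set (take k xs)" "p = (fst q - (s+1)*t, snd q)"
      unfolding A_def by (auto simp: split_def)
    have "fst q \<le> M" using bnd q(1) by (meson in_set_takeD)
    then show "fst p < t" using q stm Mm by simp
  qed
  have Blt: "\<forall>p\<in>set B. fst p < t"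
  proof
    fix p assume "p \<in> set B"
    then obtain q where q: "q \<in> set (drop k xs)" "p = (fst q - s*t, snd q)"
      unfolding B_def by (auto simp: split_def)
    then show "fst p < t" using kB assms(1) by auto
  qed
  have sR: "sorted_wrt Rel R" unfolding R_def by (simp add: Rel_def sorted_wrt_iff_nth_less)
  have sA: "sorted_wrt Rel A" unfolding A_def
    by (rule sorted_shift) (use kA srt sorted_wrt_take in auto)
  have sB: "sorted_wrt Rel B" unfolding B_def
    by (rule sorted_shift) (use Bge srt sorted_wrt_drop in auto)
  have RBA: "\<forall>x\<in>set R. \<forall>y\<in>set (B @ A). Rel x y"
    using Alt Blt unfolding R_def by (auto simp: Rel_def)
  have BA: "\<forall>x\<in>set B. \<forall>y\<in>set A. Rel x y"
  proof (intro ballI)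
    fix x y assume x: "x \<in> set B" and y: "y \<in> set A"
    obtain a where a: "a \<in> set (drop k xs)" "x = (fst a - s*t, snd a)"
      using x unfolding B_def by (auto simp: split_def)
    obtain b where b: "b \<in> set (take k xs)" "y = (fst b - (s+1)*t, snd b)"
      using y unfolding A_def by (auto simp: split_def)
    have ab: "fst b \<le> M" "m \<le> fst a" "M \<le> m + t"
      using bnd a(1) b(1) Mm by (meson in_set_takeD in_set_dropD)+
    have ge: "s*t \<le> fst a" "(s+1)*t \<le> fst b" using Bge a kA b by auto
    have le: "fst y \<le> fst x" using ab ge a b by (simp add: algebra_simps)
    have "\<not> snd y" if eq: "fst x = fst y"
    proof
      assume sy: "snd y"
      have "fst b = fst a + t" using eq a b ge by (simp add: algebra_simps)
      then have fb: "fst b = M" and fm: "M - m = t" using ab by auto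
      obtain i where i: "i < k" "b = xs ! i" using b(1) kl l_def by (auto simp: in_set_conv_nth)
      show False
      proof (cases "i = 0")
        case True then show ?thesis using hdc fm sy b i hd0 M_def m_def by simp
      next
        case False
        have "\<not> snd (xs ! i)" by (rule ovl[of 0]) (use False i kl l_def fb M_def hd0 in auto)
        then show ?thesis using sy b i by simp
      qed
    qed
    then show "Rel x y" using le Rel_def by auto
  qed
  have sAll: "sorted_wrt Rel (R @ B @ A)"
    using sR sA sB RBA BA by (auto simp: sorted_wrt_append)
  have size: "opsize (phi t xs) = opsize xs"
  proof -
    have "opsize (phi t xs) = sum_list (map fst R) + sum_list (map fst B) + sum_list (map fst A)"
      unfolding phieq opsize_def sum_filter0 by simp
    moreover have "sum_list (map fst B) + s*t * (l - k) = sum_list (map fst (drop k xs))"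
      using sum_shift[OF Bge] l_def unfolding B_def by simp
    moreover have "sum_list (map fst A) + (s+1)*t * k = sum_list (map fst (take k xs))"
      using sum_shift[OF kA] kl l_def unfolding A_def by (simp add: min_def split: if_splits)
    moreover have "sum_list (map fst R) = (s * (l - k) + (s + 1) * k) * t"
      unfolding R_def by (simp add: sum_list_replicate)
    moreover have "opsize xs = sum_list (map fst (take k xs)) + sum_list (map fst (drop k xs))"
      unfolding opsize_def by (metis append_take_drop_id map_append sum_list_append add.commute)
    ultimately show ?thesis by (simp add: algebra_simps)
  qed
  have xspos: "opsize xs > 0"
  proof -
    have "fst (hd xs) > 0" using pos ne by simp
    moreover have "fst (hd xs) \<le> opsize xs" unfolding opsize_def using ne
      by (cases xs) auto
    ultimately show ?thesis by simp
  qed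
  have nn: "phi t xs \<noteq> []"
  proof
    assume "phi t xs = []"
    then have "opsize (phi t xs) = 0" by (simp add: opsize_def)
    then show False using size xspos by simp
  qed
  have "is_overpartition (phi t xs)"
  proof -
    have "sorted_wrt Rel (filter (\<lambda>p. fst p \<noteq> 0) (R @ B @ A))"
      using sAll by (rule sorted_wrt_filter)
    moreover have "\<forall>p\<in>set (filter (\<lambda>p. fst p \<noteq> 0) (R @ B @ A)). fst p > 0" by auto
    ultimately show ?thesis unfolding overp_iff phieq by blast
  qed
  moreover have "\<forall>p\<in>set (phi t xs). fst p \<le> t \<and> (fst p = t \<longrightarrow> \<not> snd p)"
    unfolding phieq using Alt Blt unfolding R_def by auto
  ultimately show ?thesis using nn size unfolding P_set_def by auto
qed

end
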